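(* The functors $\mathcal O:\mathbf{MT_P}\to\mathbf{Frm}$ (sending $M$ to its frame $\mathcal O M$ of open elements and a proximity morphism $f$ to $f|_{\mathcal O M}$) and $\mathcal F:\mathbf{Frm}\to\mathbf{MT_P}$ (sending a frame $L$ to its Funayama envelope $\mathcal F L$ and a frame morphism $h:L_1\to L_2$ to $\mathcal F h$) are well-defined functors that establish an equivalence of categories between $\mathbf{MT_P}$ and $\mathbf{Frm}$.
   Context: An MT-algebra is a pair $(M,\square)$ where $M$ is a complete boolean algebra and $\square:M\to M$ satisfies $\square 1=1$, $\square(a\wedge b)=\square a\wedge\square b$, $\square a\le a$, $\square a\le\square\square a$; $\Diamond a=\neg\square\neg a$; open: $\square a=a$; locally closed: $a=\square b\wedge\Diamond c$; $\mathcal O M$, $\mathcal{LC}M$ the sets of open and locally closed elements ($\mathcal O M$ is a frame). A proximity morphism $f:M\to N$ is a map with (P1) $f|_{\mathcal O M}:\mathcal O M\to\mathcal O N$ a frame morphism; (P2) $f(a\wedge b)=f(a)\wedge f(b)$; (P3) $f(\bigvee S)=\bigvee f[S]$ for finite $S\subseteq\mathcal{LC}M$; (P4) $f(a)=\bigvee\{f(x):x\in\mathcal{LC}M, x\le a\}$. $\mathbf{MT_P}$ is the category of MT-algebras and proximity morphisms with composition $(g\star f)(a)=\bigvee\{g(f(x)):x\in\mathcal{LC}M_1,x\le a\}$ and identities $1_M(a)=\bigvee\{x\in\mathcal{LC}M:x\le a\}$. $\mathbf{Frm}$ is the category of frames and frame morphisms. For a frame $L$, $\mathcal B L$ denotes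 its boolean envelope (free boolean extension: a boolean algebra containing $L$ as a bounded sublattice generating it, such that every bounded lattice homomorphism from $L$ into a boolean algebra extends uniquely to a boolean homomorphism); the inclusion $L\hookrightarrow\mathcal BL$ has a right adjoint $\square:\mathcal BL\to L$. Let $\overline{\mathcal BL}$ be the MacNeille completion of $\mathcal BL$ and $\overline\square a=\bigvee\{\square b: b\in\mathcal BL, b\le a\}$. The Funayama envelope is the MT-algebra $\mathcal F L=(\overline{\mathcal BL},\overline\square)$; its open elements are exactly $L$. For a frame morphism $h:L_1\to L_2$, $\mathcal Bh:\mathcal BL_1\to\mathcal BL_2$ is its unique boolean extension and $\mathcal Fh(a)=\bigvee\{\mathcal Bh(b): b\in\mathcal BL_1, b\le a\}$. *)

theory Defs
  imports Main
begin

text \<open>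
  A complete boolean algebra is a type of sort
  {complete_lattice, boolean_algebra}.  (The library class complete_boolean_algebra
  additionally demands complete distributivity and is therefore NOT used.)
  A frame is represented by a carrier set L inside a complete lattice type, closed
  under arbitrary joins, binary meets and containing top, and satisfying the frame
  distributive law; its joins and finite meets are those of the ambient lattice.
  Every frame is of this form (take the frame itself as the type and L = UNIV).
\<close>

definition frame_on :: "'a::complete_lattice set \<Rightarrow> bool" where
  "frame_on L \<longleftrightarrow>
     (\<forall>S. S \<subseteq> L \<longrightarrow> Sup S \<in> L) \<and> top \<in> L \<and>
     (\<forall>a\<in>L. \<forall>b\<in>L. inf a b \<in> L) \<and>
     (\<forall>a\<in>L. \<forall>S. S \<subseteq> L \<longrightarrow> inf a (Sup S) = Sup ((inf a) ` S))"

definition frame_hom ::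
  "'a::complete_lattice set \<Rightarrow> 'b::complete_lattice set \<Rightarrow> ('a \<Rightarrow> 'b) \<Rightarrow> bool" where
  "frame_hom L1 L2 h \<longleftrightarrow>
     (\<forall>x\<in>L1. h x \<in> L2) \<and> h top = top \<and>
     (\<forall>a\<in>L1. \<forall>b\<in>L1. h (inf a b) = inf (h a) (h b)) \<and>
     (\<forall>S. S \<subseteq> L1 \<longrightarrow> h (Sup S) = Sup (h ` S))"

definition frame_iso ::
  "'a::complete_lattice set \<Rightarrow> 'b::complete_lattice set \<Rightarrow> ('a \<Rightarrow> 'b) \<Rightarrow> bool" where
  "frame_iso L1 L2 h \<longleftrightarrow> frame_hom L1 L2 h \<and> bij_betw h L1 L2"

definition MT_algebra :: "('m::{complete_lattice,boolean_algebra} \<Rightarrow> 'm) \<Rightarrow> bool" where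
  "MT_algebra box \<longleftrightarrow>
     box top = top \<and>
     (\<forall>a b. box (inf a b) = inf (box a) (box b)) \<and>
     (\<forall>a. box a \<le> a) \<and>
     (\<forall>a. box a \<le> box (box a))"

definition dia :: "('m::{complete_lattice,boolean_algebra} \<Rightarrow> 'm) \<Rightarrow> 'm \<Rightarrow> 'm" where
  "dia box a = - box (- a)"

definition opens :: "('m::{complete_lattice,boolean_algebra} \<Rightarrow> 'm) \<Rightarrow> 'm set" where
  "opens box = {a. box a = a}"

definition LC :: "('m::{complete_lattice,boolean_algebra} \<Rightarrow> 'm) \<Rightarrow> 'm set" where
  "LC box = {a. \<exists>b c. a = inf (box b) (dia box c)}"

definition proximity ::
  "('m::{complete_lattice,boolean_algebra} \<Rightarrow> 'm) \<Rightarrow>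
   ('n::{complete_lattice,boolean_algebra} \<Rightarrow> 'n) \<Rightarrow> ('m \<Rightarrow> 'n) \<Rightarrow> bool" where
  "proximity box1 box2 f \<longleftrightarrow>
     frame_hom (opens box1) (opens box2) f \<and>
     (\<forall>a b. f (inf a b) = inf (f a) (f b)) \<and>
     (\<forall>S. finite S \<and> S \<subseteq> LC box1 \<longrightarrow> f (Sup S) = Sup (f ` S)) \<and>
     (\<forall>a. f a = Sup {f x | x. x \<in> LC box1 \<and> x \<le> a})"

text \<open>Composition g \<star> f (f : M1 \<rightarrow> M2, g : M2 \<rightarrow> M3; box1 is the modal operator of M1)
  and identities in the category MT_P.\<close>
definition compP ::
  "('m::{complete_lattice,boolean_algebra} \<Rightarrow> 'm) \<Rightarrow> ('n \<Rightarrow> 'k::complete_lattice) \<Rightarrow> ('m \<Rightarrow> 'n)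
   \<Rightarrow> 'm \<Rightarrow> 'k" where
  "compP box1 g f a = Sup {g (f x) | x. x \<in> LC box1 \<and> x \<le> a}"

definition idP :: "('m::{complete_lattice,boolean_algebra} \<Rightarrow> 'm) \<Rightarrow> 'm \<Rightarrow> 'm" where
  "idP box a = Sup {x. x \<in> LC box \<and> x \<le> a}"

definition bool_closed :: "'c::boolean_algebra set \<Rightarrow> bool" where
  "bool_closed B \<longleftrightarrow> top \<in> B \<and> bot \<in> B \<and>
     (\<forall>a\<in>B. \<forall>b\<in>B. inf a b \<in> B \<and> sup a b \<in> B) \<and> (\<forall>a\<in>B. - a \<in> B)"

definition bool_gen :: "'c::boolean_algebra set \<Rightarrow> 'c set" where
  "bool_gen X = \<Inter>{B. X \<subseteq> B \<and> bool_closed B}"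

text \<open>The boolean envelope of the frame L, realised inside 'c via the embedding e:
  the boolean subalgebra generated by the bounded sublattice e ` L.\<close>
definition benv :: "'a set \<Rightarrow> ('a \<Rightarrow> 'c::boolean_algebra) \<Rightarrow> 'c set" where
  "benv L e = bool_gen (e ` L)"

text \<open>funayama_data L e: the complete boolean algebra 'c together with e is the
  MacNeille completion of the boolean envelope of L: e embeds L as a bounded
  sublattice (injective bounded lattice homomorphism), which generates the boolean
  subalgebra benv L e, and benv L e is join-dense and meet-dense in 'c.\<close>
definition funayama_data ::
  "'a::complete_lattice set \<Rightarrow> ('a \<Rightarrow> 'c::{complete_lattice,boolean_algebra}) \<Rightarrow> bool" where
  "funayama_data L e \<longleftrightarrow>
     inj_on e L \<and> e top = top \<and> e bot = bot \<and>
     (\<forall>a\<in>L. \<forall>b\<in>L. e (inf a b) = inf (e a) (e b) \<and> e (sup a b) = sup (e a) (e b)) \<and>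
     (\<forall>x. x = Sup {b \<in> benv L e. b \<le> x}) \<and>
     (\<forall>x. x = Inf {b \<in> benv L e. x \<le> b})"

definition radj :: "'a::complete_lattice set \<Rightarrow> ('a \<Rightarrow> 'c::boolean_algebra) \<Rightarrow> 'c \<Rightarrow> 'a" where
  "radj L e b = (THE x. x \<in> L \<and> e x \<le> b \<and> (\<forall>y\<in>L. e y \<le> b \<longrightarrow> y \<le> x))"

definition funbox ::
  "'a::complete_lattice set \<Rightarrow> ('a \<Rightarrow> 'c::{complete_lattice,boolean_algebra}) \<Rightarrow> 'c \<Rightarrow> 'c" where
  "funbox L e a = Sup {e (radj L e b) | b. b \<in> benv L e \<and> b \<le> a}"

definition bool_hom_on :: "'c::boolean_algebra set \<Rightarrow> ('c \<Rightarrow> 'd::boolean_algebra) \<Rightarrow> bool" where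
  "bool_hom_on B g \<longleftrightarrow> g top = top \<and> g bot = bot \<and>
     (\<forall>a\<in>B. \<forall>b\<in>B. g (inf a b) = inf (g a) (g b) \<and> g (sup a b) = sup (g a) (g b)) \<and>
     (\<forall>a\<in>B. g (- a) = - g a)"

definition Bmor ::
  "'a::complete_lattice set \<Rightarrow> ('a \<Rightarrow> 'c::boolean_algebra) \<Rightarrow>
   ('b \<Rightarrow> 'd::boolean_algebra) \<Rightarrow> ('a \<Rightarrow> 'b) \<Rightarrow> 'c \<Rightarrow> 'd" where
  "Bmor L1 e1 e2 h = (SOME g. bool_hom_on (benv L1 e1) g \<and> (\<forall>x\<in>L1. g (e1 x) = e2 (h x)))"

definition Fmor ::
  "'a::complete_lattice set \<Rightarrow> ('a \<Rightarrow> 'c::{complete_lattice,boolean_algebra}) \<Rightarrow>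
   ('b \<Rightarrow> 'd::{complete_lattice,boolean_algebra}) \<Rightarrow> ('a \<Rightarrow> 'b) \<Rightarrow> 'c \<Rightarrow> 'd" where
  "Fmor L1 e1 e2 h a = Sup {Bmor L1 e1 e2 h b | b. b \<in> benv L1 e1 \<and> b \<le> a}"

end

theory Submission
  imports Defs
begin


lemma bool_inf_Sup:
  fixes a :: "'a::{complete_lattice,boolean_algebra}"
  shows "inf a (Sup S) = Sup ((inf a) ` S)"
proof (rule antisym)
  let ?u = "Sup ((inf a) ` S)"
  have "\<forall>s\<in>S. s \<le> sup ?u (- a)"
  proof
    fix s assume s: "s \<in> S"
    have e: "s = sup (inf s a) (inf s (-a))"
      by (metis inf_sup_distrib1 inf_top_right sup_compl_top)
    have "inf s a \<le> ?u" using s by (metis SUP_upper inf.commute)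
    then show "s \<le> sup ?u (- a)" using e
      by (metis inf_le2 sup_mono)
  qed
  hence "Sup S \<le> sup ?u (- a)" by (simp add: Sup_least)
  hence "inf a (Sup S) \<le> inf a (sup ?u (-a))" by (simp add: le_infI2)
  also have "\<dots> = inf a ?u" by (simp add: inf_sup_distrib1)
  also have "\<dots> \<le> ?u" by simp
  finally show "inf a (Sup S) \<le> ?u" .
  show "?u \<le> inf a (Sup S)"
    by (rule SUP_least) (simp add: Sup_upper le_infI2)
qed

lemma bool_Sup_inf_Sup:
  fixes f :: "'b \<Rightarrow> 'a::{complete_lattice,boolean_algebra}"
  shows "inf (Sup (f ` P)) (Sup (g ` Q)) = Sup ((\<lambda>(p,q). inf (f p) (g q)) ` (P \<times> Q))"
proof (rule antisym)
  have "inf (Sup (f ` P)) (Sup (g ` Q)) = inf (Sup (g ` Q)) (Sup (f ` P))" by (rule inf.commute)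
  also have "\<dots> = Sup (inf (Sup (g ` Q)) ` f ` P)" by (rule bool_inf_Sup)
  also have "\<dots> = Sup ((\<lambda>p. inf (f p) (Sup (g ` Q))) ` P)" by (simp add: image_image inf.commute)
  also have "\<dots> \<le> Sup ((\<lambda>(p,q). inf (f p) (g q)) ` (P \<times> Q))"
  proof (rule SUP_least)
    fix p assume p: "p \<in> P"
    have "inf (f p) (Sup (g ` Q)) = Sup ((\<lambda>q. inf (f p) (g q)) ` Q)"
      by (simp add: bool_inf_Sup image_image)
    also have "\<dots> \<le> Sup ((\<lambda>(p,q). inf (f p) (g q)) ` (P \<times> Q))"
      by (rule SUP_least) (rule Sup_upper, use p in force)
    finally show "inf (f p) (Sup (g ` Q)) \<le> Sup ((\<lambda>(p,q). inf (f p) (g q)) ` (P \<times> Q))" .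
  qed
  finally show "inf (Sup (f ` P)) (Sup (g ` Q)) \<le> Sup ((\<lambda>(p,q). inf (f p) (g q)) ` (P \<times> Q))" .
  show "Sup ((\<lambda>(p,q). inf (f p) (g q)) ` (P \<times> Q)) \<le> inf (Sup (f ` P)) (Sup (g ` Q))"
    by (rule SUP_least) (auto intro: le_infI1 le_infI2 SUP_upper)
qed

lemma shunt:
  fixes a :: "'a::boolean_algebra"
  shows "a \<le> sup b R \<longleftrightarrow> inf a (-b) \<le> R"
proof
  assume "a \<le> sup b R"
  hence "inf a (-b) \<le> inf (sup b R) (-b)" by (rule inf_mono) simp
  also have "\<dots> = inf R (-b)" by (simp add: inf_sup_distrib2)
  also have "\<dots> \<le> R" by simp
  finally show "inf a (-b) \<le> R" .
next
  assume h: "inf a (-b) \<le> R"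
  have "a = sup (inf a b) (inf a (-b))"
    by (metis inf_sup_distrib1 inf_top_right sup_compl_top)
  also have "\<dots> \<le> sup b R" using h by (meson inf_le2 sup_mono)
  finally show "a \<le> sup b R" .
qed

lemma bool_key:
  fixes x :: "'a::boolean_algebra"
  shows "inf x (- y) \<le> sup (inf a (- c)) R \<longleftrightarrow>
         inf x (- sup y a) \<le> R \<and> inf (inf x c) (- y) \<le> R"
proof -
  have "inf x (- y) \<le> sup (inf a (- c)) R \<longleftrightarrow> inf (inf x (- y)) (- inf a (- c)) \<le> R"
    by (rule shunt)
  also have "inf (inf x (- y)) (- inf a (- c)) = sup (inf x (- sup y a)) (inf (inf x c) (- y))"
    by (simp add: inf_sup_distrib1 inf_sup_aci)
  finally show ?thesis by simp
qed




lemma MT_facts: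
  assumes "MT_algebra box"
  shows "box top = top" "box (inf a b) = inf (box a) (box b)" "box a \<le> a"
    "box (box a) = box a" "box bot = bot" "a \<le> b \<Longrightarrow> box a \<le> box b"
proof -
  show "box top = top" "box (inf a b) = inf (box a) (box b)" "box a \<le> a"
    using assms by (auto simp: MT_algebra_def)
  show "box (box a) = box a" using assms unfolding MT_algebra_def by (metis antisym)
  show "box bot = bot" using assms unfolding MT_algebra_def by (metis bot.extremum_uniqueI)
  show "a \<le> b \<Longrightarrow> box a \<le> box b" using assms unfolding MT_algebra_def
    by (metis inf.absorb_iff2 inf.orderI inf_commute)
qed

lemma opens_frame:
  assumes "MT_algebra box" shows "frame_on (opens box)"
proof -
  note M = MT_facts[OF assms]
  have "Sup S \<in> opens box" if "S \<subseteq> opens box" for S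
  proof -
    have "Sup S \<le> box (Sup S)"
    proof (rule Sup_least)
      fix s assume "s \<in> S"
      hence "s = box s" using that by (auto simp: opens_def)
      also have "\<dots> \<le> box (Sup S)" using M(6) \<open>s\<in>S\<close> by (simp add: Sup_upper)
      finally show "s \<le> box (Sup S)" .
    qed
    thus ?thesis using M(3) by (simp add: opens_def antisym)
  qed
  moreover have "top \<in> opens box" using M by (simp add: opens_def)
  moreover have "\<forall>a\<in>opens box. \<forall>b\<in>opens box. inf a b \<in> opens box"
    using M(2) by (simp add: opens_def)
  ultimately show ?thesis unfolding frame_on_def by (simp add: bool_inf_Sup)
qed

lemma LC_box:
  assumes "MT_algebra box"
  shows "LC box = {inf u (- v) | u v. u \<in> opens box \<and> v \<in> opens box}"
proof -
  note M = MT_facts[OF assms]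
  show ?thesis
  proof (rule set_eqI, rule iffI)
    fix x assume "x \<in> LC box"
    then obtain b c where "x = inf (box b) (dia box c)" by (auto simp: LC_def)
    thus "x \<in> {inf u (- v) | u v. u \<in> opens box \<and> v \<in> opens box}"
      unfolding dia_def opens_def by (intro CollectI exI[of _ "box b"] exI[of _ "box (-c)"]) (simp add: M(4))
  next
    fix x assume "x \<in> {inf u (- v) | u v. u \<in> opens box \<and> v \<in> opens box}"
    then obtain u v where "x = inf u (-v)" "box u = u" "box v = v" by (auto simp: opens_def)
    hence "x = inf (box u) (dia box (-v))" by (simp add: dia_def)
    thus "x \<in> LC box" by (auto simp: LC_def)
  qed
qed

lemma opens_LC: "MT_algebra box \<Longrightarrow> u \<in> opens box \<Longrightarrow> u \<in> LC box"
  "MT_algebra box \<Longrightarrow> u \<in> opens box \<Longrightarrow> - u \<in> LC box"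
proof -
  assume "MT_algebra box" "u \<in> opens box"
  note M = MT_facts[OF this(1)]
  have "top \<in> opens box" "bot \<in> opens box" using M by (auto simp: opens_def)
  have "u = inf u (- bot)" "- u = inf top (- u)" by simp_all
  thus "u \<in> LC box" "- u \<in> LC box" using \<open>u \<in> opens box\<close> \<open>top \<in> opens box\<close> \<open>bot \<in> opens box\<close>
    unfolding LC_box[OF \<open>MT_algebra box\<close>] by blast+
qed

lemma proxD:
  assumes "proximity box1 box2 f"
  shows "frame_hom (opens box1) (opens box2) f" "\<And>a b. f (inf a b) = inf (f a) (f b)"
    "\<And>S. finite S \<Longrightarrow> S \<subseteq> LC box1 \<Longrightarrow> f (Sup S) = Sup (f ` S)"
    "\<And>a. f a = Sup {f x | x. x \<in> LC box1 \<and> x \<le> a}"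
  using assms unfolding proximity_def by blast+

lemma prox_facts:
  assumes "MT_algebra box1" "proximity box1 box2 f"
  shows "a \<le> b \<Longrightarrow> f a \<le> f b" "f top = top" "f bot = bot"
    "u \<in> opens box1 \<Longrightarrow> f (- u) = - f u"
proof -
  have fi: "\<And>a b. f (inf a b) = inf (f a) (f b)" using proxD[OF assms(2)] by blast
  show "a \<le> b \<Longrightarrow> f a \<le> f b"
  proof -
    assume "a \<le> b"
    hence "f a = f (inf a b)" by (simp add: inf.absorb1)
    also have "\<dots> = inf (f a) (f b)" by (rule fi)
    finally show "f a \<le> f b" by (metis inf.cobounded2)
  qed
  have fh: "frame_hom (opens box1) (opens box2) f" using proxD[OF assms(2)] by blast
  show ft: "f top = top" using fh by (simp add: frame_hom_def)
  have "f (Sup {}) = Sup (f ` {})" using fh unfolding frame_hom_def by (metis empty_subsetI)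
  thus fb: "f bot = bot" by simp
  assume u: "u \<in> opens box1"
  have fs: "f (Sup {u, -u}) = Sup (f ` {u, -u})" by (rule proxD(3)[OF assms(2)]) (use opens_LC[OF assms(1) u] in auto)
  have "sup (f u) (f (-u)) = top" using fs ft by (simp del: compl_sup_top add: sup_compl_top)
  moreover have "inf (f u) (f (-u)) = bot" using fi[of u "-u", symmetric] fb by simp
  ultimately show "f (- u) = - f u"
    using compl_unique by metis
qed




definition pc :: "('x \<Rightarrow> 'c::boolean_algebra) \<Rightarrow> 'x \<times> 'x \<Rightarrow> 'c" where
  "pc e p = inf (e (fst p)) (- e (snd p))"

definition lclosed :: "'a::bounded_lattice set \<Rightarrow> bool" where
  "lclosed L \<longleftrightarrow> top \<in> L \<and> bot \<in> L \<and> (\<forall>a\<in>L. \<forall>b\<in>L. inf a b \<in> L \<and> sup a b \<in> L)"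

definition lhom_on :: "'a::bounded_lattice set \<Rightarrow> ('a \<Rightarrow> 'b::bounded_lattice) \<Rightarrow> bool" where
  "lhom_on L e \<longleftrightarrow> e top = top \<and> e bot = bot \<and>
     (\<forall>a\<in>L. \<forall>b\<in>L. e (inf a b) = inf (e a) (e b) \<and> e (sup a b) = sup (e a) (e b))"

definition oemb :: "'a::order set \<Rightarrow> ('a \<Rightarrow> 'b::order) \<Rightarrow> bool" where
  "oemb L e \<longleftrightarrow> (\<forall>a\<in>L. \<forall>b\<in>L. e a \<le> e b \<longleftrightarrow> a \<le> b)"

lemma lhom_mono: "lhom_on L e \<Longrightarrow> a \<in> L \<Longrightarrow> b \<in> L \<Longrightarrow> a \<le> b \<Longrightarrow> e a \<le> e b"
  unfolding lhom_on_def by (metis inf.absorb_iff1 inf.cobounded2)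

lemma frame_lclosed: "frame_on L \<Longrightarrow> lclosed L"
proof -
  assume f: "frame_on L"
  have "Sup {} \<in> L" "\<And>a b. a \<in> L \<Longrightarrow> b \<in> L \<Longrightarrow> Sup {a,b} \<in> L"
    using f unfolding frame_on_def by (auto simp del: Sup_insert Sup_empty)
  thus ?thesis using f unfolding frame_on_def lclosed_def by simp
qed

lemma frame_hom_lhom:
  assumes "frame_on L1" "frame_hom L1 L2 h"
  shows "lhom_on L1 h" "\<And>x. x \<in> L1 \<Longrightarrow> h x \<in> L2"
proof -
  have s: "\<And>S. S \<subseteq> L1 \<Longrightarrow> h (Sup S) = Sup (h ` S)" using assms(2) by (simp add: frame_hom_def)
  have "h (Sup {}) = Sup (h ` {})" by (rule s) simp
  hence "h bot = bot" by simp
  moreover have "\<And>a b. a \<in> L1 \<Longrightarrow> b \<in> L1 \<Longrightarrow> h (sup a b) = sup (h a) (h b)"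
  proof -
    fix a b assume "a \<in> L1" "b \<in> L1"
    hence "h (Sup {a,b}) = Sup (h ` {a,b})" by (intro s) auto
    thus "h (sup a b) = sup (h a) (h b)" by simp
  qed
  ultimately show "lhom_on L1 h" using assms(2) unfolding lhom_on_def frame_hom_def by auto
  show "\<And>x. x \<in> L1 \<Longrightarrow> h x \<in> L2" using assms(2) unfolding frame_hom_def by auto
qed

lemma Sup_insert_img: "Sup ((f::'a \<Rightarrow> 'b::complete_lattice) ` insert q Q) = sup (f q) (Sup (f ` Q))" by (simp add: Sup_insert)

lemma le_iff_diff: "(a::'a::boolean_algebra) \<le> b \<longleftrightarrow> inf a (-b) \<le> bot"
  using shunt[of a b bot] by simp

lemma transfer1:
  fixes e1 :: "'x::bounded_lattice \<Rightarrow> 'c::{complete_lattice,boolean_algebra}"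
    and e2 :: "'y::bounded_lattice \<Rightarrow> 'd::{complete_lattice,boolean_algebra}"
  assumes C1: "lclosed L1" and H1: "lhom_on L1 e1" and O1: "oemb L1 e1"
    and hL: "\<And>x. x \<in> L1 \<Longrightarrow> h x \<in> L2" and Hh: "lhom_on L1 h"
    and H2: "lhom_on L2 e2"
    and Q: "finite Q" "Q \<subseteq> L1 \<times> L1"
  shows "x \<in> L1 \<Longrightarrow> y \<in> L1 \<Longrightarrow> pc e1 (x,y) \<le> Sup (pc e1 ` Q) \<Longrightarrow>
         pc e2 (h x, h y) \<le> Sup ((\<lambda>p. pc e2 (map_prod h h p)) ` Q)"
  using Q
proof (induction Q arbitrary: x y rule: finite_induct)
  case empty
  hence "e1 x \<le> e1 y" by (simp add: pc_def le_iff_diff[of "e1 x"])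
  hence "x \<le> y" using O1 empty by (simp add: oemb_def)
  hence "h x \<le> h y" using lhom_mono[OF Hh] empty by simp
  hence "e2 (h x) \<le> e2 (h y)" using lhom_mono[OF H2] hL empty by simp
  thus ?case by (simp add: pc_def le_iff_diff[of "e2 (h x)"])
next
  case (insert q Q)
  obtain a c where q: "q = (a,c)" by (cases q)
  have ac: "a \<in> L1" "c \<in> L1" using insert q by auto
  have "pc e1 (x,y) \<le> sup (pc e1 (a,c)) (Sup (pc e1 ` Q))" using insert q by simp
  hence "inf (e1 x) (- sup (e1 y) (e1 a)) \<le> Sup (pc e1 ` Q) \<and>
         inf (inf (e1 x) (e1 c)) (- e1 y) \<le> Sup (pc e1 ` Q)"
    unfolding pc_def fst_conv snd_conv by (rule bool_key[THEN iffD1])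
  hence "pc e1 (x, sup y a) \<le> Sup (pc e1 ` Q) \<and> pc e1 (inf x c, y) \<le> Sup (pc e1 ` Q)"
    using H1 ac insert.prems unfolding lhom_on_def pc_def by simp
  hence "pc e2 (h x, h (sup y a)) \<le> Sup ((\<lambda>p. pc e2 (map_prod h h p)) ` Q) \<and>
         pc e2 (h (inf x c), h y) \<le> Sup ((\<lambda>p. pc e2 (map_prod h h p)) ` Q)"
    using insert.IH insert.prems ac C1 insert.hyps unfolding lclosed_def by auto
  hence "inf (e2 (h x)) (- sup (e2 (h y)) (e2 (h a))) \<le> Sup ((\<lambda>p. pc e2 (map_prod h h p)) ` Q) \<and>
         inf (inf (e2 (h x)) (e2 (h c))) (- e2 (h y)) \<le> Sup ((\<lambda>p. pc e2 (map_prod h h p)) ` Q)"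
    using H2 Hh hL ac insert.prems unfolding lhom_on_def pc_def by simp
  hence "pc e2 (h x, h y) \<le> sup (pc e2 (h a, h c)) (Sup ((\<lambda>p. pc e2 (map_prod h h p)) ` Q))"
    unfolding pc_def fst_conv snd_conv by (rule bool_key[THEN iffD2])
  thus ?case using q by simp
qed

lemma transfer:
  fixes e1 :: "'x::bounded_lattice \<Rightarrow> 'c::{complete_lattice,boolean_algebra}"
    and e2 :: "'y::bounded_lattice \<Rightarrow> 'd::{complete_lattice,boolean_algebra}"
  assumes C1: "lclosed L1" and H1: "lhom_on L1 e1" and O1: "oemb L1 e1"
    and hL: "\<And>x. x \<in> L1 \<Longrightarrow> h x \<in> L2" and Hh: "lhom_on L1 h"
    and H2: "lhom_on L2 e2"
    and Q: "finite Q" "Q \<subseteq> L1 \<times> L1" and P: "P \<subseteq> L1 \<times> L1"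
    and le: "Sup (pc e1 ` P) \<le> Sup (pc e1 ` Q)"
  shows "Sup ((\<lambda>p. pc e2 (map_prod h h p)) ` P) \<le> Sup ((\<lambda>p. pc e2 (map_prod h h p)) ` Q)"
proof (rule SUP_least)
  fix p assume p: "p \<in> P"
  obtain x y where xy: "p = (x,y)" by (cases p)
  have "pc e1 (x,y) \<le> Sup (pc e1 ` Q)" using le p xy by (metis SUP_upper order_trans)
  thus "pc e2 (map_prod h h p) \<le> Sup ((\<lambda>p. pc e2 (map_prod h h p)) ` Q)"
    using transfer1[OF assms(1-8)] xy p P by auto
qed




definition emb_frame ::
  "('m::{complete_lattice,boolean_algebra} \<Rightarrow> 'm) \<Rightarrow> 'x::complete_lattice set \<Rightarrow> ('x \<Rightarrow> 'm) \<Rightarrow> bool" where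
  "emb_frame box L e \<longleftrightarrow> MT_algebra box \<and> frame_on L \<and> lhom_on L e \<and> oemb L e \<and>
     (\<forall>S. S \<subseteq> L \<longrightarrow> e (Sup S) = Sup (e ` S)) \<and> opens box = e ` L \<and> LC box = pc e ` (L \<times> L)"

definition Gm ::
  "'x::complete_lattice set \<Rightarrow> ('x \<Rightarrow> 'c::{complete_lattice,boolean_algebra}) \<Rightarrow>
   ('y \<Rightarrow> 'd::{complete_lattice,boolean_algebra}) \<Rightarrow> ('x \<Rightarrow> 'y) \<Rightarrow> 'c \<Rightarrow> 'd" where
  "Gm L1 e1 e2 h a = Sup ((\<lambda>p. pc e2 (map_prod h h p)) ` {p \<in> L1 \<times> L1. pc e1 p \<le> a})"

definition meetp :: "'x::lattice \<times> 'x \<Rightarrow> 'x \<times> 'x \<Rightarrow> 'x \<times> 'x" where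
  "meetp p q = (inf (fst p) (fst q), sup (snd p) (snd q))"

lemma pc_meetp:
  fixes e :: "'x::bounded_lattice \<Rightarrow> 'c::boolean_algebra"
  assumes "lhom_on L e" "p \<in> L \<times> L" "q \<in> L \<times> L"
  shows "pc e (meetp p q) = inf (pc e p) (pc e q)"
  using assms unfolding lhom_on_def pc_def meetp_def
  by (auto simp: inf_aci)

lemma hh_meetp:
  assumes "lhom_on L h" "p \<in> L \<times> L" "q \<in> L \<times> L"
  shows "map_prod h h (meetp p q) = meetp (map_prod h h p) (map_prod h h q)"
  using assms unfolding lhom_on_def meetp_def by (cases p, cases q) auto

lemma emb_frameD:
  assumes "emb_frame box L e"
  shows "MT_algebra box" "frame_on L" "lhom_on L e" "oemb L e" "lclosed L"
    "\<And>S. S \<subseteq> L \<Longrightarrow> e (Sup S) = Sup (e ` S)" "opens box = e ` L" "LC box = pc e ` (L \<times> L)"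
  using assms frame_lclosed unfolding emb_frame_def by auto

context
  fixes box1 :: "'m::{complete_lattice,boolean_algebra} \<Rightarrow> 'm"
    and box2 :: "'n::{complete_lattice,boolean_algebra} \<Rightarrow> 'n"
    and L1 :: "'x::complete_lattice set" and L2 :: "'y::complete_lattice set"
    and e1 :: "'x \<Rightarrow> 'm" and e2 :: "'y \<Rightarrow> 'n" and h :: "'x \<Rightarrow> 'y"
  assumes E1: "emb_frame box1 L1 e1" and E2: "emb_frame box2 L2 e2" and FH: "frame_hom L1 L2 h"
begin

lemma hprops: "lhom_on L1 h" "\<And>x. x \<in> L1 \<Longrightarrow> h x \<in> L2"
  using frame_hom_lhom[OF emb_frameD(2)[OF E1] FH] by auto

lemma G_transfer:
  assumes "finite Q" "Q \<subseteq> L1 \<times> L1" "P \<subseteq> L1 \<times> L1" "Sup (pc e1 ` P) \<le> Sup (pc e1 ` Q)"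
  shows "Sup ((\<lambda>p. pc e2 (map_prod h h p)) ` P) \<le> Sup ((\<lambda>p. pc e2 (map_prod h h p)) ` Q)"
  by (rule transfer[OF emb_frameD(5,3,4)[OF E1] hprops(2) hprops(1) emb_frameD(3)[OF E2] assms])

lemma G_mono: "a \<le> b \<Longrightarrow> Gm L1 e1 e2 h a \<le> Gm L1 e1 e2 h b"
  unfolding Gm_def by (rule Sup_subset_mono) auto

lemma G_piece:
  assumes "p \<in> L1 \<times> L1"
  shows "Gm L1 e1 e2 h (pc e1 p) = pc e2 (map_prod h h p)"
proof (rule antisym)
  show "Gm L1 e1 e2 h (pc e1 p) \<le> pc e2 (map_prod h h p)"
    unfolding Gm_def
  proof (rule SUP_least)
    fix q assume "q \<in> {p' \<in> L1 \<times> L1. pc e1 p' \<le> pc e1 p}"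
    hence "Sup ((\<lambda>p. pc e2 (map_prod h h p)) ` {q}) \<le> Sup ((\<lambda>p. pc e2 (map_prod h h p)) ` {p})"
      using assms by (intro G_transfer) auto
    thus "pc e2 (map_prod h h q) \<le> pc e2 (map_prod h h p)" by simp
  qed
  show "pc e2 (map_prod h h p) \<le> Gm L1 e1 e2 h (pc e1 p)"
    unfolding Gm_def by (rule SUP_upper) (use assms in auto)
qed

lemma G_open:
  assumes "w \<in> L1"
  shows "Gm L1 e1 e2 h (e1 w) = e2 (h w)"
proof -
  have b: "bot \<in> L1" using emb_frameD(5)[OF E1] by (simp add: lclosed_def)
  have "pc e1 (w, bot) = e1 w" using emb_frameD(3)[OF E1] by (simp add: pc_def lhom_on_def)
  moreover have "pc e2 (map_prod h h (w, bot)) = e2 (h w)"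
    using emb_frameD(3)[OF E2] hprops(1) by (simp add: pc_def lhom_on_def)
  ultimately show ?thesis using G_piece[of "(w,bot)"] assms b by simp
qed

lemma G_prox: "proximity box1 box2 (Gm L1 e1 e2 h)"
proof -
  let ?G = "Gm L1 e1 e2 h"
  let ?f = "\<lambda>p. pc e2 (map_prod h h p)"
  note D1 = emb_frameD[OF E1] and D2 = emb_frameD[OF E2]
  have P1: "frame_hom (opens box1) (opens box2) ?G"
    unfolding frame_hom_def
  proof (intro conjI ballI allI impI)
    fix x assume "x \<in> opens box1"
    then obtain w where "w \<in> L1" "x = e1 w" using D1(7) by auto
    thus "?G x \<in> opens box2" using G_open hprops(2) D2(7) by auto
  next
    have "top \<in> L1" using D1(5) by (simp add: lclosed_def)
    thus "?G top = top" using G_open[of top] D1(3) D2(3) hprops(1) by (simp add: lhom_on_def)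
  next
    fix a b assume "a \<in> opens box1" "b \<in> opens box1"
    then obtain u v where uv: "u \<in> L1" "v \<in> L1" "a = e1 u" "b = e1 v" using D1(7) by auto
    have "inf u v \<in> L1" using D1(5) uv by (simp add: lclosed_def)
    have "inf a b = e1 (inf u v)" using uv D1(3) by (simp add: lhom_on_def)
    hence "?G (inf a b) = e2 (h (inf u v))" using G_open \<open>inf u v \<in> L1\<close> by simp
    also have "\<dots> = inf (e2 (h u)) (e2 (h v))" using uv D2(3) hprops by (simp add: lhom_on_def)
    finally show "?G (inf a b) = inf (?G a) (?G b)" using uv G_open by simp
  next
    fix S assume "S \<subseteq> opens box1"
    then obtain T where T: "T \<subseteq> L1" "S = e1 ` T" using D1(7) by (auto simp: subset_image_iff)
    have "Sup T \<in> L1" using D1(2) T by (simp add: frame_on_def)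
    have "Sup S = e1 (Sup T)" using T D1(6) by simp
    hence "?G (Sup S) = e2 (h (Sup T))" using G_open \<open>Sup T \<in> L1\<close> by simp
    also have "\<dots> = e2 (Sup (h ` T))" using FH T by (simp add: frame_hom_def)
    also have "\<dots> = Sup (e2 ` h ` T)" using T hprops(2) by (intro D2(6)) auto
    also have "\<dots> = Sup (?G ` S)" using T G_open by (simp add: image_image subset_iff)
    finally show "?G (Sup S) = Sup (?G ` S)" .
  qed
  have P2: "?G (inf a b) = inf (?G a) (?G b)" for a b
  proof (rule antisym)
    show "?G (inf a b) \<le> inf (?G a) (?G b)" using G_mono by simp
    have "inf (?G a) (?G b) = Sup ((\<lambda>(p,q). inf (?f p) (?f q)) `
           ({p \<in> L1 \<times> L1. pc e1 p \<le> a} \<times> {p \<in> L1 \<times> L1. pc e1 p \<le> b}))"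
      unfolding Gm_def by (rule bool_Sup_inf_Sup)
    also have "\<dots> \<le> ?G (inf a b)"
    proof (rule SUP_least)
      fix pq assume pq: "pq \<in> {p \<in> L1 \<times> L1. pc e1 p \<le> a} \<times> {p \<in> L1 \<times> L1. pc e1 p \<le> b}"
      obtain p q where pq': "pq = (p,q)" by (cases pq)
      have pL: "p \<in> L1 \<times> L1" "q \<in> L1 \<times> L1" using pq pq' by auto
      have m: "meetp p q \<in> L1 \<times> L1" using pL D1(5) unfolding lclosed_def meetp_def by auto
      have hL: "map_prod h h p \<in> L2 \<times> L2" "map_prod h h q \<in> L2 \<times> L2" using pL hprops(2) by auto
      have "inf (?f p) (?f q) = ?f (meetp p q)"
        using pc_meetp[OF D2(3) hL] hh_meetp[OF hprops(1) pL] by simp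
      moreover have "pc e1 (meetp p q) \<le> inf a b" using pc_meetp[OF D1(3) pL] pq pq'
        by (auto intro: le_infI1 le_infI2)
      ultimately show "(\<lambda>(p,q). inf (?f p) (?f q)) pq \<le> ?G (inf a b)"
        unfolding Gm_def using pq' m by (auto intro!: SUP_upper)
    qed
    finally show "inf (?G a) (?G b) \<le> ?G (inf a b)" .
  qed
  have P3: "?G (Sup S) = Sup (?G ` S)" if S: "finite S" "S \<subseteq> LC box1" for S
  proof (rule antisym)
    obtain Q where Q: "Q \<subseteq> L1 \<times> L1" "finite Q" "S = pc e1 ` Q"
      using S D1(8) by (metis finite_subset_image)
    have GS: "Sup (?G ` S) = Sup (?f ` Q)" unfolding Q(3) image_image
      by (rule arg_cong[where f=Sup], rule image_cong) (use Q G_piece in auto)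
    show "?G (Sup S) \<le> Sup (?G ` S)" unfolding GS unfolding Gm_def
    proof (rule SUP_least)
      fix p assume "p \<in> {p \<in> L1 \<times> L1. pc e1 p \<le> Sup S}"
      hence "Sup (?f ` {p}) \<le> Sup (?f ` Q)" using Q by (intro G_transfer) auto
      thus "?f p \<le> Sup (?f ` Q)" by simp
    qed
    show "Sup (?G ` S) \<le> ?G (Sup S)" by (rule SUP_least) (simp add: G_mono Sup_upper)
  qed
  have P4: "?G a = Sup {?G x | x. x \<in> LC box1 \<and> x \<le> a}" for a
  proof (rule antisym)
    show "?G a \<le> Sup {?G x | x. x \<in> LC box1 \<and> x \<le> a}" unfolding Gm_def[of _ _ _ _ a]
    proof (rule SUP_least)
      fix p assume p: "p \<in> {p \<in> L1 \<times> L1. pc e1 p \<le> a}"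
      hence "?f p = ?G (pc e1 p)" using G_piece by simp
      moreover have "pc e1 p \<in> LC box1" using p D1(8) by auto
      ultimately show "?f p \<le> Sup {?G x | x. x \<in> LC box1 \<and> x \<le> a}"
        using p by (intro Sup_upper) auto
    qed
    show "Sup {?G x | x. x \<in> LC box1 \<and> x \<le> a} \<le> ?G a"
      by (rule Sup_least) (auto simp: G_mono)
  qed
  show ?thesis unfolding proximity_def using P1 P2 P3 P4 by blast
qed

end




lemma bool_gen_closed: "bool_closed (bool_gen X)" "X \<subseteq> bool_gen X"
  unfolding bool_gen_def bool_closed_def by auto

lemma bool_gen_least: "X \<subseteq> B \<Longrightarrow> bool_closed B \<Longrightarrow> bool_gen X \<subseteq> B"
  unfolding bool_gen_def by auto

context
  fixes L :: "'x::complete_lattice set" and e :: "'x \<Rightarrow> 'p::{complete_lattice,boolean_algebra}"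
  assumes FL: "frame_on L" and FD: "funayama_data L e"
begin

lemma LC_L: "lclosed L" using frame_lclosed[OF FL] .

lemma fd_lhom: "lhom_on L e"
  using FD unfolding funayama_data_def lhom_on_def by auto

lemma fd_oemb: "oemb L e"
  unfolding oemb_def
proof (intro ballI iffI)
  fix a b assume ab: "a \<in> L" "b \<in> L"
  show "a \<le> b \<Longrightarrow> e a \<le> e b" using lhom_mono[OF fd_lhom ab] .
  assume "e a \<le> e b"
  hence "e (inf a b) = e a" using fd_lhom ab by (simp add: lhom_on_def inf.absorb1)
  moreover have "inf a b \<in> L" using LC_L ab by (simp add: lclosed_def)
  ultimately have "inf a b = a" using FD ab unfolding funayama_data_def inj_on_def by blast
  thus "a \<le> b" by (metis inf.cobounded2)
qed

lemma benv_closed: "bool_closed (benv L e)" "e ` L \<subseteq> benv L e"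
  unfolding benv_def using bool_gen_closed by blast+

definition NF :: "'p set" where
  "NF = {Sup (pc e ` P) | P. finite P \<and> P \<subseteq> L \<times> L}"

lemma NF_inf: "a \<in> NF \<Longrightarrow> b \<in> NF \<Longrightarrow> inf a b \<in> NF"
proof -
  assume "a \<in> NF" "b \<in> NF"
  then obtain P Q where PQ: "finite P" "P \<subseteq> L \<times> L" "a = Sup (pc e ` P)"
    "finite Q" "Q \<subseteq> L \<times> L" "b = Sup (pc e ` Q)" unfolding NF_def by auto
  have "inf a b = Sup ((\<lambda>(p,q). inf (pc e p) (pc e q)) ` (P \<times> Q))"
    using PQ bool_Sup_inf_Sup by simp
  also have "\<dots> = Sup (pc e ` (case_prod meetp ` (P \<times> Q)))"
    unfolding image_image
  proof (rule arg_cong[where f=Sup], rule image_cong)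
    fix x assume "x \<in> P \<times> Q"
    then obtain p q where "x = (p,q)" "p \<in> L \<times> L" "q \<in> L \<times> L" using PQ by blast
    thus "(\<lambda>(p,q). inf (pc e p) (pc e q)) x = pc e (case_prod meetp x)"
      using pc_meetp[OF fd_lhom] by simp
  qed simp
  finally have eq: "inf a b = Sup (pc e ` (case_prod meetp ` (P \<times> Q)))" .
  have "case_prod meetp ` (P \<times> Q) \<subseteq> L \<times> L"
    using PQ LC_L unfolding lclosed_def meetp_def by (force simp: subset_iff)
  thus ?thesis unfolding NF_def using eq PQ by blast
qed

lemma NF_sup: "a \<in> NF \<Longrightarrow> b \<in> NF \<Longrightarrow> sup a b \<in> NF"
proof -
  assume "a \<in> NF" "b \<in> NF"
  then obtain P Q where PQ: "finite P" "P \<subseteq> L \<times> L" "a = Sup (pc e ` P)"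
    "finite Q" "Q \<subseteq> L \<times> L" "b = Sup (pc e ` Q)" unfolding NF_def by auto
  have "sup a b = Sup (pc e ` (P \<union> Q))" using PQ by (simp add: image_Un Sup_union_distrib)
  thus ?thesis unfolding NF_def using PQ by blast
qed

lemma NF_pc: "p \<in> L \<times> L \<Longrightarrow> pc e p \<in> NF"
  unfolding NF_def by (rule CollectI, rule exI[of _ "{p}"]) auto

lemma NF_top: "top \<in> NF"
proof -
  have "top \<in> L" "bot \<in> L" using LC_L by (auto simp: lclosed_def)
  moreover have "pc e (top, bot) = top" using fd_lhom by (simp add: pc_def lhom_on_def)
  ultimately show ?thesis using NF_pc[of "(top,bot)"] by simp
qed

lemma NF_bot: "bot \<in> NF"
  unfolding NF_def by (rule CollectI, rule exI[of _ "{}"]) auto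

lemma NF_compl: "a \<in> NF \<Longrightarrow> - a \<in> NF"
proof -
  assume "a \<in> NF"
  then obtain P where P: "finite P" "P \<subseteq> L \<times> L" "a = Sup (pc e ` P)" unfolding NF_def by auto
  have "- Sup (pc e ` P) \<in> NF" using P(1,2)
  proof (induction P rule: finite_induct)
    case empty thus ?case using NF_top by simp
  next
    case (insert q P)
    obtain u v where q: "q = (u,v)" by (cases q)
    have uv: "u \<in> L" "v \<in> L" using insert q by auto
    have tb: "top \<in> L" "bot \<in> L" using LC_L by (auto simp: lclosed_def)
    have "- pc e q = sup (pc e (top, u)) (pc e (v, bot))"
      using fd_lhom q by (simp add: pc_def lhom_on_def)
    hence "- pc e q \<in> NF" using NF_sup NF_pc uv tb by simp
    moreover have "- Sup (pc e ` P) \<in> NF" using insert by auto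
    ultimately show ?case using NF_inf by simp
  qed
  thus "- a \<in> NF" using P by simp
qed

lemma NF_closed: "bool_closed NF"
  unfolding bool_closed_def using NF_top NF_bot NF_inf NF_sup NF_compl by blast

lemma NF_contains: "e ` L \<subseteq> NF"
proof
  fix x assume "x \<in> e ` L"
  then obtain w where w: "w \<in> L" "x = e w" by auto
  have "bot \<in> L" using LC_L by (simp add: lclosed_def)
  moreover have "pc e (w, bot) = e w" using fd_lhom by (simp add: pc_def lhom_on_def)
  ultimately show "x \<in> NF" using NF_pc[of "(w,bot)"] w by simp
qed

lemma benv_NF: "benv L e = NF"
proof
  show "benv L e \<subseteq> NF" unfolding benv_def by (rule bool_gen_least[OF NF_contains NF_closed])
  have bc: "bool_closed (benv L e)" using benv_closed by simp
  show "NF \<subseteq> benv L e"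
  proof
    fix x assume "x \<in> NF"
    then obtain P where P: "finite P" "P \<subseteq> L \<times> L" "x = Sup (pc e ` P)" unfolding NF_def by auto
    have "Sup (pc e ` P) \<in> benv L e" using P(1,2)
    proof (induction P rule: finite_induct)
      case empty thus ?case using bc by (simp add: bool_closed_def)
    next
      case (insert q P)
      have "e (fst q) \<in> benv L e" "e (snd q) \<in> benv L e" using insert benv_closed by auto
      hence "pc e q \<in> benv L e" using bc unfolding pc_def bool_closed_def by blast
      thus ?case using insert bc unfolding bool_closed_def by simp
    qed
    thus "x \<in> benv L e" using P by simp
  qed
qed

end



context
  fixes L :: "'x::complete_lattice set" and e :: "'x \<Rightarrow> 'p::{complete_lattice,boolean_algebra}"
  assumes FL: "frame_on L" and FD: "funayama_data L e"
begin

lemma funayama: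
  assumes S: "S \<subseteq> L"
  shows "e (Sup S) = Sup (e ` S)"
proof (rule antisym)
  have s0: "Sup S \<in> L" using FL S by (simp add: frame_on_def)
  show "Sup (e ` S) \<le> e (Sup S)"
    by (rule SUP_least, rule lhom_mono[OF fd_lhom[OF FL FD]]) (use S s0 in \<open>auto intro: Sup_upper\<close>)
  have md: "Sup (e ` S) = Inf {b \<in> benv L e. Sup (e ` S) \<le> b}"
    using FD unfolding funayama_data_def by blast
  have "e (Sup S) \<le> Inf {b \<in> benv L e. Sup (e ` S) \<le> b}"
  proof (rule Inf_greatest)
    fix b assume b: "b \<in> {b \<in> benv L e. Sup (e ` S) \<le> b}"
    have "- b \<in> benv L e" using b benv_closed[OF FL FD] by (simp add: bool_closed_def)
    then obtain P where P: "finite P" "P \<subseteq> L \<times> L" "- b = Sup (pc e ` P)"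
      using benv_NF[OF FL FD] unfolding NF_def[OF FL FD] by auto
    have "inf (e (Sup S)) (pc e p) \<le> bot" if p: "p \<in> P" for p
    proof -
      obtain u v where uv: "p = (u,v)" by (cases p)
      have uvL: "u \<in> L" "v \<in> L" using P p uv by auto
      have "inf s u \<le> v" if s: "s \<in> S" for s
      proof -
        have "e s \<le> Sup (e ` S)" using s by (rule SUP_upper)
        also have "\<dots> \<le> b" using b by simp
        finally have "inf (e s) (- b) \<le> bot" using le_iff_diff by blast
        moreover have pb: "pc e p \<le> - b" unfolding P(3) using p by (rule SUP_upper)
        have "inf (e s) (pc e p) \<le> inf (e s) (- b)" using pb by (rule inf_mono[OF order_refl])
        ultimately have "inf (e s) (pc e p) \<le> bot" by (rule order_trans[rotated])
        hence "inf (inf (e s) (e u)) (- e v) \<le> bot" using uv by (simp add: pc_def inf_assoc)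
        moreover have "inf (e s) (e u) = e (inf s u)" using fd_lhom[OF FL FD] s S uvL
          by (auto simp: lhom_on_def)
        ultimately have "e (inf s u) \<le> e v" using le_iff_diff by metis
        moreover have "inf s u \<in> L" using LC_L[OF FL FD] s S uvL by (auto simp: lclosed_def)
        ultimately show "inf s u \<le> v" using fd_oemb[OF FL FD] uvL by (simp add: oemb_def)
      qed
      hence "inf u (Sup S) \<le> v" using FL S uvL unfolding frame_on_def
        by (simp add: SUP_least inf_commute)
      hence "inf (Sup S) u \<le> v" by (simp add: inf_commute)
      moreover have "inf (Sup S) u \<in> L" using LC_L[OF FL FD] s0 uvL by (auto simp: lclosed_def)
      ultimately have "e (inf (Sup S) u) \<le> e v" using lhom_mono[OF fd_lhom[OF FL FD]] uvL by simp
      moreover have "inf (e (Sup S)) (e u) = e (inf (Sup S) u)" using fd_lhom[OF FL FD] s0 uvL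
          by (auto simp: lhom_on_def)
      ultimately have "inf (inf (e (Sup S)) (e u)) (- e v) \<le> bot" using le_iff_diff by metis
      thus ?thesis using uv by (simp add: pc_def inf_assoc)
    qed
    hence "inf (e (Sup S)) (- b) \<le> bot" unfolding P(3) bool_inf_Sup image_image
      by (simp add: SUP_least)
    thus "e (Sup S) \<le> b" using le_iff_diff by blast
  qed
  thus "e (Sup S) \<le> Sup (e ` S)" using md by simp
qed

definition core :: "'p \<Rightarrow> 'x" where "core a = Sup {w \<in> L. e w \<le> a}"

lemma core: "core a \<in> L" "e (core a) \<le> a" "w \<in> L \<Longrightarrow> e w \<le> a \<Longrightarrow> w \<le> core a"
proof -
  show "core a \<in> L" using FL unfolding core_def frame_on_def by auto
  have "e (core a) = Sup (e ` {w \<in> L. e w \<le> a})" unfolding core_def by (rule funayama) auto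
  thus "e (core a) \<le> a" by (auto intro: SUP_least)
  show "w \<in> L \<Longrightarrow> e w \<le> a \<Longrightarrow> w \<le> core a" unfolding core_def by (auto intro: Sup_upper)
qed

lemma core_e: "w \<in> L \<Longrightarrow> core (e w) = w"
proof -
  assume w: "w \<in> L"
  have "e (core (e w)) \<le> e w" by (rule core(2))
  hence "core (e w) \<le> w" using fd_oemb[OF FL FD] w core(1) by (simp add: oemb_def)
  moreover have "w \<le> core (e w)" using w by (rule core(3)) simp
  ultimately show ?thesis by (rule antisym)
qed

lemma core_mono: "a \<le> c \<Longrightarrow> core a \<le> core c"
  using core by (meson order_trans)

lemma radj_core: "radj L e b = core b"
  unfolding radj_def
proof (rule the_equality)
  show "core b \<in> L \<and> e (core b) \<le> b \<and> (\<forall>y\<in>L. e y \<le> b \<longrightarrow> y \<le> core b)" using core by auto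
  fix x assume "x \<in> L \<and> e x \<le> b \<and> (\<forall>y\<in>L. e y \<le> b \<longrightarrow> y \<le> x)"
  thus "x = core b" using core by (meson antisym)
qed

lemma funbox_core: "funbox L e a = e (core a)"
proof (rule antisym)
  show "funbox L e a \<le> e (core a)" unfolding funbox_def
  proof (rule Sup_least)
    fix x assume "x \<in> {e (radj L e b) | b. b \<in> benv L e \<and> b \<le> a}"
    then obtain b where "x = e (core b)" "b \<le> a" by (auto simp: radj_core)
    moreover have "core b \<le> core a" using \<open>b \<le> a\<close> core_mono by simp
    ultimately show "x \<le> e (core a)" using lhom_mono[OF fd_lhom[OF FL FD]] core by simp
  qed
  have "e (core a) \<in> benv L e" using core benv_closed[OF FL FD] by auto
  moreover have "e (core a) = e (radj L e (e (core a)))" using core_e core radj_core by simp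
  ultimately show "e (core a) \<le> funbox L e a" unfolding funbox_def
    using core(2) by (intro Sup_upper) blast
qed

lemma funbox_MT: "MT_algebra (funbox L e)"
  unfolding MT_algebra_def funbox_core
proof (intro conjI allI)
  have "top \<in> L" using LC_L[OF FL FD] by (simp add: lclosed_def)
  hence "core top = top" using core by (simp add: top.extremum_uniqueI)
  thus "e (core top) = top" using fd_lhom[OF FL FD] by (simp add: lhom_on_def)
  show "e (core a) \<le> a" for a using core by simp
  show "e (core a) \<le> e (core (e (core a)))" for a using core_e core by simp
  fix a b
  have i: "inf (core a) (core b) \<in> L" using LC_L[OF FL FD] core by (simp add: lclosed_def)
  have ei: "e (inf (core a) (core b)) = inf (e (core a)) (e (core b))"
    using fd_lhom[OF FL FD] core by (simp add: lhom_on_def)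
  have "inf (core a) (core b) \<le> core (inf a b)"
    using core(3)[OF i] ei core(2) by (simp add: le_infI1 le_infI2 inf_mono)
  moreover have "core (inf a b) \<le> inf (core a) (core b)" using core_mono by simp
  ultimately have "core (inf a b) = inf (core a) (core b)" by (rule antisym[rotated])
  thus "e (core (inf a b)) = inf (e (core a)) (e (core b))" using ei by simp
qed

lemma funbox_opens: "opens (funbox L e) = e ` L"
proof
  show "opens (funbox L e) \<subseteq> e ` L"
  proof
    fix x assume "x \<in> opens (funbox L e)"
    hence "x = e (core x)" by (simp add: opens_def funbox_core)
    thus "x \<in> e ` L" by (metis core(1) imageI)
  qed
  show "e ` L \<subseteq> opens (funbox L e)" unfolding opens_def funbox_core using core_e by auto
qed

lemma funbox_emb: "emb_frame (funbox L e) L e"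
proof -
  have "LC (funbox L e) = pc e ` (L \<times> L)"
    unfolding LC_box[OF funbox_MT] funbox_opens
  proof (intro set_eqI iffI)
    fix x assume "x \<in> {inf u (- v) |u v. u \<in> e ` L \<and> v \<in> e ` L}"
    then obtain a b where "a \<in> L" "b \<in> L" "x = inf (e a) (- e b)" by blast
    thus "x \<in> pc e ` (L \<times> L)" by (intro image_eqI[of _ _ "(a,b)"]) (auto simp: pc_def)
  next
    fix x assume "x \<in> pc e ` (L \<times> L)"
    then obtain a b where "a \<in> L" "b \<in> L" "x = inf (e a) (- e b)" by (auto simp: pc_def)
    thus "x \<in> {inf u (- v) |u v. u \<in> e ` L \<and> v \<in> e ` L}" by blast
  qed
  thus ?thesis unfolding emb_frame_def
    using funbox_MT FL fd_lhom[OF FL FD] fd_oemb[OF FL FD] funayama funbox_opens by blast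
qed

end



lemma Sup_pc_meet:
  fixes e :: "'x::bounded_lattice \<Rightarrow> 'c::{complete_lattice,boolean_algebra}"
  assumes "lhom_on L e" "P \<subseteq> L \<times> L" "Q \<subseteq> L \<times> L"
  shows "Sup (pc e ` (case_prod meetp ` (P \<times> Q))) = inf (Sup (pc e ` P)) (Sup (pc e ` Q))"
proof -
  have "inf (Sup (pc e ` P)) (Sup (pc e ` Q)) = Sup ((\<lambda>(p,q). inf (pc e p) (pc e q)) ` (P \<times> Q))"
    by (rule bool_Sup_inf_Sup)
  also have "\<dots> = Sup (pc e ` (case_prod meetp ` (P \<times> Q)))"
    unfolding image_image
  proof (rule arg_cong[where f=Sup], rule image_cong)
    fix x assume "x \<in> P \<times> Q"
    then obtain p q where "x = (p,q)" "p \<in> L \<times> L" "q \<in> L \<times> L" using assms by blast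
    thus "(\<lambda>(p,q). inf (pc e p) (pc e q)) x = pc e (case_prod meetp x)"
      using pc_meetp[OF assms(1)] by simp
  qed simp
  finally show ?thesis by simp
qed

context
  fixes L1 :: "'x::complete_lattice set" and e1 :: "'x \<Rightarrow> 'p::{complete_lattice,boolean_algebra}"
    and L2 :: "'y::complete_lattice set" and e2 :: "'y \<Rightarrow> 'q::{complete_lattice,boolean_algebra}"
    and h :: "'x \<Rightarrow> 'y"
  assumes FL1: "frame_on L1" and FD1: "funayama_data L1 e1"
    and FL2: "frame_on L2" and FD2: "funayama_data L2 e2" and FH: "frame_hom L1 L2 h"
begin

lemma hp: "lhom_on L1 h" "\<And>x. x \<in> L1 \<Longrightarrow> h x \<in> L2"
  using frame_hom_lhom[OF FL1 FH] by auto

lemma tr: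
  assumes "finite Q" "Q \<subseteq> L1 \<times> L1" "P \<subseteq> L1 \<times> L1" "Sup (pc e1 ` P) \<le> Sup (pc e1 ` Q)"
  shows "Sup (pc e2 ` map_prod h h ` P) \<le> Sup (pc e2 ` map_prod h h ` Q)"
  using transfer[OF LC_L[OF FL1 FD1] fd_lhom[OF FL1 FD1] fd_oemb[OF FL1 FD1] hp(2) hp(1)
      fd_lhom[OF FL2 FD2] assms] by (simp add: image_image)

definition rep :: "'p \<Rightarrow> ('x \<times> 'x) set" where
  "rep b = (SOME P. finite P \<and> P \<subseteq> L1 \<times> L1 \<and> b = Sup (pc e1 ` P))"

definition g0 :: "'p \<Rightarrow> 'q" where
  "g0 b = Sup (pc e2 ` map_prod h h ` rep b)"

lemma g0_eq:
  assumes P: "finite P" "P \<subseteq> L1 \<times> L1"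
  shows "g0 (Sup (pc e1 ` P)) = Sup (pc e2 ` map_prod h h ` P)"
proof -
  let ?b = "Sup (pc e1 ` P)"
  have "\<exists>R. finite R \<and> R \<subseteq> L1 \<times> L1 \<and> ?b = Sup (pc e1 ` R)" using P by blast
  hence R: "finite (rep ?b)" "rep ?b \<subseteq> L1 \<times> L1" "?b = Sup (pc e1 ` rep ?b)"
    unfolding rep_def by (metis (mono_tags, lifting) someI_ex)+
  show ?thesis unfolding g0_def
    by (rule antisym; rule tr) (use R P in auto)
qed

lemma benv_rep: "b \<in> benv L1 e1 \<Longrightarrow> \<exists>P. finite P \<and> P \<subseteq> L1 \<times> L1 \<and> b = Sup (pc e1 ` P)"
  using benv_NF[OF FL1 FD1] unfolding NF_def[OF FL1 FD1] by auto

lemma tb1: "top \<in> L1" "bot \<in> L1" using LC_L[OF FL1 FD1] by (auto simp: lclosed_def)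

lemma g0_hom: "bool_hom_on (benv L1 e1) g0" "\<And>x. x \<in> L1 \<Longrightarrow> g0 (e1 x) = e2 (h x)"
proof -
  have l1: "lhom_on L1 e1" and l2: "lhom_on L2 e2" using fd_lhom FL1 FD1 FL2 FD2 by auto
  have ex: "\<And>x. x \<in> L1 \<Longrightarrow> e1 x = Sup (pc e1 ` {(x, bot)})"
    using l1 by (simp add: pc_def lhom_on_def)
  show gx: "\<And>x. x \<in> L1 \<Longrightarrow> g0 (e1 x) = e2 (h x)"
  proof -
    fix x assume x: "x \<in> L1"
    have "g0 (e1 x) = Sup (pc e2 ` map_prod h h ` {(x, bot)})"
      unfolding ex[OF x] by (rule g0_eq) (use x tb1 in auto)
    thus "g0 (e1 x) = e2 (h x)" using l2 hp by (simp add: pc_def lhom_on_def)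
  qed
  have gt: "g0 top = top"
  proof -
    have "e1 top = top" using l1 by (simp add: lhom_on_def)
    hence "g0 top = e2 (h top)" using gx tb1 by metis
    thus ?thesis using l2 hp by (simp add: lhom_on_def)
  qed
  have gb: "g0 bot = bot"
  proof -
    have "g0 (Sup (pc e1 ` {})) = Sup (pc e2 ` map_prod h h ` {})" by (rule g0_eq) auto
    thus ?thesis by simp
  qed
  have gs: "g0 (sup a b) = sup (g0 a) (g0 b)" if ab: "a \<in> benv L1 e1" "b \<in> benv L1 e1" for a b
  proof -
    obtain P Q where PQ: "finite P" "P \<subseteq> L1 \<times> L1" "a = Sup (pc e1 ` P)"
      "finite Q" "Q \<subseteq> L1 \<times> L1" "b = Sup (pc e1 ` Q)"
      using benv_rep[OF ab(1)] benv_rep[OF ab(2)] by blast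
    have "sup a b = Sup (pc e1 ` (P \<union> Q))" using PQ by (simp add: image_Un Sup_union_distrib)
    hence "g0 (sup a b) = Sup (pc e2 ` map_prod h h ` (P \<union> Q))" using PQ g0_eq by simp
    thus ?thesis using PQ g0_eq by (simp add: image_Un Sup_union_distrib)
  qed
  have gi: "g0 (inf a b) = inf (g0 a) (g0 b)" if ab: "a \<in> benv L1 e1" "b \<in> benv L1 e1" for a b
  proof -
    obtain P Q where PQ: "finite P" "P \<subseteq> L1 \<times> L1" "a = Sup (pc e1 ` P)"
      "finite Q" "Q \<subseteq> L1 \<times> L1" "b = Sup (pc e1 ` Q)"
      using benv_rep[OF ab(1)] benv_rep[OF ab(2)] by blast
    let ?M = "case_prod meetp ` (P \<times> Q)"
    have M: "finite ?M" "?M \<subseteq> L1 \<times> L1"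
      using PQ LC_L[OF FL1 FD1] unfolding lclosed_def meetp_def by (force simp: subset_iff)+
    have "inf a b = Sup (pc e1 ` ?M)" using Sup_pc_meet[OF l1 PQ(2) PQ(5)] PQ by simp
    hence "g0 (inf a b) = Sup (pc e2 ` map_prod h h ` ?M)" using g0_eq M by simp
    also have "map_prod h h ` ?M = case_prod meetp ` (map_prod h h ` P \<times> map_prod h h ` Q)"
    proof -
      have "map_prod h h ` ?M = (\<lambda>(p,q). map_prod h h (meetp p q)) ` (P \<times> Q)"
        by (simp add: image_image case_prod_beta)
      also have "\<dots> = (\<lambda>(p,q). meetp (map_prod h h p) (map_prod h h q)) ` (P \<times> Q)"
      proof (rule image_cong)
        fix x assume "x \<in> P \<times> Q"
        then obtain p q where "x = (p,q)" "p \<in> L1 \<times> L1" "q \<in> L1 \<times> L1" using PQ by blast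
        thus "(\<lambda>(p,q). map_prod h h (meetp p q)) x = (\<lambda>(p,q). meetp (map_prod h h p) (map_prod h h q)) x"
          using hh_meetp[OF hp(1)] by simp
      qed simp
      also have "\<dots> = case_prod meetp ` (map_prod (map_prod h h) (map_prod h h) ` (P \<times> Q))"
        unfolding image_image by (rule image_cong) (auto split: prod.splits)
      also have "\<dots> = case_prod meetp ` (map_prod h h ` P \<times> map_prod h h ` Q)"
        by (simp only: map_prod_surj_on[OF refl refl])
      finally show ?thesis .
    qed
    also have "Sup (pc e2 ` \<dots>) = inf (Sup (pc e2 ` map_prod h h ` P)) (Sup (pc e2 ` map_prod h h ` Q))"
      by (rule Sup_pc_meet[OF l2]) (use PQ hp(2) in auto)
    finally show ?thesis using PQ g0_eq by simp
  qed
  have bc: "bool_closed (benv L1 e1)" using benv_closed[OF FL1 FD1] by simp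
  have gc: "g0 (- a) = - g0 a" if a: "a \<in> benv L1 e1" for a
  proof -
    have na: "- a \<in> benv L1 e1" using a bc by (simp add: bool_closed_def)
    have "inf (g0 a) (g0 (- a)) = bot" using gi[OF a na] gb by simp
    moreover have "sup (g0 a) (g0 (- a)) = top" using gs[OF a na] gt by simp
    ultimately show ?thesis using compl_unique by metis
  qed
  show "bool_hom_on (benv L1 e1) g0" unfolding bool_hom_on_def using gt gb gi gs gc by blast
qed

lemma Bmor_hom: "bool_hom_on (benv L1 e1) (Bmor L1 e1 e2 h)"
  "\<And>x. x \<in> L1 \<Longrightarrow> Bmor L1 e1 e2 h (e1 x) = e2 (h x)"
proof -
  have "\<exists>g. bool_hom_on (benv L1 e1) g \<and> (\<forall>x\<in>L1. g (e1 x) = e2 (h x))" using g0_hom by blast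
  hence "bool_hom_on (benv L1 e1) (Bmor L1 e1 e2 h) \<and> (\<forall>x\<in>L1. Bmor L1 e1 e2 h (e1 x) = e2 (h x))"
    unfolding Bmor_def by (rule someI_ex)
  thus "bool_hom_on (benv L1 e1) (Bmor L1 e1 e2 h)"
    "\<And>x. x \<in> L1 \<Longrightarrow> Bmor L1 e1 e2 h (e1 x) = e2 (h x)" by auto
qed

lemma Bmor_pc: "p \<in> L1 \<times> L1 \<Longrightarrow> Bmor L1 e1 e2 h (pc e1 p) = pc e2 (map_prod h h p)"
proof -
  assume p: "p \<in> L1 \<times> L1"
  have in1: "e1 (fst p) \<in> benv L1 e1" "e1 (snd p) \<in> benv L1 e1"
    using p benv_closed[OF FL1 FD1] by auto
  have bc: "bool_closed (benv L1 e1)" using benv_closed[OF FL1 FD1] by simp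
  hence "- e1 (snd p) \<in> benv L1 e1" using in1 by (simp add: bool_closed_def)
  thus ?thesis using Bmor_hom in1 p unfolding pc_def bool_hom_on_def by (auto simp: mem_Times_iff)
qed

lemma Bmor_Sup: "finite P \<Longrightarrow> P \<subseteq> L1 \<times> L1 \<Longrightarrow>
   Bmor L1 e1 e2 h (Sup (pc e1 ` P)) = Sup (pc e2 ` map_prod h h ` P)"
proof (induction P rule: finite_induct)
  case empty thus ?case using Bmor_hom(1) by (simp add: bool_hom_on_def)
next
  case (insert q P)
  have bc: "bool_closed (benv L1 e1)" using benv_closed[OF FL1 FD1] by simp
  have "pc e1 q \<in> benv L1 e1" using insert benv_NF[OF FL1 FD1] NF_pc[OF FL1 FD1] by auto
  moreover have "Sup (pc e1 ` P) \<in> benv L1 e1" using insert benv_NF[OF FL1 FD1]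
    unfolding NF_def[OF FL1 FD1] by auto
  ultimately have "Bmor L1 e1 e2 h (Sup (pc e1 ` insert q P)) =
     sup (Bmor L1 e1 e2 h (pc e1 q)) (Bmor L1 e1 e2 h (Sup (pc e1 ` P)))"
    using Bmor_hom(1) unfolding bool_hom_on_def by simp
  thus ?case using insert Bmor_pc by simp
qed

lemma Fmor_Gm: "Fmor L1 e1 e2 h = Gm L1 e1 e2 h"
proof (rule ext, rule antisym)
  fix a
  show "Fmor L1 e1 e2 h a \<le> Gm L1 e1 e2 h a" unfolding Fmor_def
  proof (rule Sup_least)
    fix x assume "x \<in> {Bmor L1 e1 e2 h b |b. b \<in> benv L1 e1 \<and> b \<le> a}"
    then obtain b where b: "x = Bmor L1 e1 e2 h b" "b \<in> benv L1 e1" "b \<le> a" by blast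
    obtain P where P: "finite P" "P \<subseteq> L1 \<times> L1" "b = Sup (pc e1 ` P)" using benv_rep b by metis
    have "x = Sup (pc e2 ` map_prod h h ` P)" using b P Bmor_Sup by simp
    also have "\<dots> \<le> Gm L1 e1 e2 h a" unfolding Gm_def image_image
    proof (rule SUP_least)
      fix p assume p: "p \<in> P"
      have "pc e1 p \<le> a" using p P b by (metis SUP_upper order_trans)
      thus "pc e2 (map_prod h h p) \<le> Sup ((\<lambda>p. pc e2 (map_prod h h p)) ` {p \<in> L1 \<times> L1. pc e1 p \<le> a})"
        using p P by (intro SUP_upper) auto
    qed
    finally show "x \<le> Gm L1 e1 e2 h a" .
  qed
  show "Gm L1 e1 e2 h a \<le> Fmor L1 e1 e2 h a" unfolding Gm_def Fmor_def
  proof (rule SUP_least)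
    fix p assume p: "p \<in> {p \<in> L1 \<times> L1. pc e1 p \<le> a}"
    have "pc e1 p \<in> benv L1 e1" using p benv_NF[OF FL1 FD1] NF_pc[OF FL1 FD1] by auto
    hence "Bmor L1 e1 e2 h (pc e1 p) \<in> {Bmor L1 e1 e2 h b |b. b \<in> benv L1 e1 \<and> b \<le> a}"
      using p by blast
    thus "pc e2 (map_prod h h p) \<le> Sup {Bmor L1 e1 e2 h b |b. b \<in> benv L1 e1 \<and> b \<le> a}"
      using Bmor_pc p by (metis (no_types, lifting) Sup_upper mem_Collect_eq)
  qed
qed

end



lemma idP_open: "MT_algebra box \<Longrightarrow> a \<in> opens box \<Longrightarrow> idP box a = a"
  unfolding idP_def by (rule antisym) (auto intro: Sup_least Sup_upper opens_LC)

lemma compP_open: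
  assumes "MT_algebra box1" "MT_algebra box2" "proximity box1 box2 f" "proximity box2 box3 g"
    "a \<in> opens box1"
  shows "compP box1 g f a = g (f a)"
  unfolding compP_def
proof (rule antisym)
  show "Sup {g (f x) |x. x \<in> LC box1 \<and> x \<le> a} \<le> g (f a)"
    by (rule Sup_least) (auto intro!: prox_facts(1)[OF assms(2,4)] prox_facts(1)[OF assms(1,3)])
  show "g (f a) \<le> Sup {g (f x) |x. x \<in> LC box1 \<and> x \<le> a}"
    by (rule Sup_upper) (use opens_LC(1)[OF assms(1,5)] in blast)
qed

lemma frame_hom_id: "frame_hom L L id" unfolding frame_hom_def by auto

lemma frame_hom_comp: "frame_hom L1 L2 h \<Longrightarrow> frame_hom L2 L3 k \<Longrightarrow> frame_hom L1 L3 (k \<circ> h)"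
proof -
  assume h: "frame_hom L1 L2 h" and k: "frame_hom L2 L3 k"
  have "(k \<circ> h) (Sup S) = Sup ((k \<circ> h) ` S)" if S: "S \<subseteq> L1" for S
  proof -
    have "h (Sup S) = Sup (h ` S)" using h S by (simp add: frame_hom_def)
    moreover have "h ` S \<subseteq> L2" using h S by (auto simp: frame_hom_def)
    ultimately show ?thesis using k by (simp add: frame_hom_def image_comp)
  qed
  thus ?thesis using h k unfolding frame_hom_def by auto
qed

lemma compP_cong: "(\<And>x. x \<in> LC box \<Longrightarrow> g1 (f1 x) = g2 (f2 x)) \<Longrightarrow> compP box g1 f1 = compP box g2 f2"
  unfolding compP_def by (rule ext, rule arg_cong[where f=Sup]) (metis (no_types, lifting))

lemma compP_inv: "(\<And>x. x \<in> LC box \<Longrightarrow> g (f x) = x) \<Longrightarrow> compP box g f = idP box"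
  unfolding compP_def idP_def by (rule ext, rule arg_cong[where f=Sup]) (metis (no_types, lifting))

lemma emb_id: "MT_algebra box \<Longrightarrow> emb_frame box (opens box) id"
  unfolding emb_frame_def
proof (intro conjI)
  assume M: "MT_algebra box"
  show "frame_on (opens box)" by (rule opens_frame[OF M])
  show "LC box = pc id ` (opens box \<times> opens box)"
    unfolding LC_box[OF M]
  proof (intro set_eqI iffI)
    fix x assume "x \<in> {inf u (- v) |u v. u \<in> opens box \<and> v \<in> opens box}"
    then obtain a b where "a \<in> opens box" "b \<in> opens box" "x = inf a (- b)" by blast
    thus "x \<in> pc id ` (opens box \<times> opens box)" by (intro image_eqI[of _ _ "(a,b)"]) (auto simp: pc_def)
  next
    fix x assume "x \<in> pc id ` (opens box \<times> opens box)"
    then obtain a b where "a \<in> opens box" "b \<in> opens box" "x = inf a (- b)" by (auto simp: pc_def)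
    thus "x \<in> {inf u (- v) |u v. u \<in> opens box \<and> v \<in> opens box}" by blast
  qed
qed (auto simp: lhom_on_def oemb_def)

lemma Gm_id_Fmor:
  assumes "frame_on L" "funayama_data L e"
  shows "Fmor L e e id = idP (funbox L e)"
proof -
  have "Fmor L e e id = Gm L e e id" by (rule Fmor_Gm[OF assms assms frame_hom_id])
  also have "\<dots> = idP (funbox L e)"
  proof
    fix a
    have "{x. x \<in> LC (funbox L e) \<and> x \<le> a} = pc e ` {p \<in> L \<times> L. pc e p \<le> a}"
      using emb_frameD(8)[OF funbox_emb[OF assms]] by auto
    thus "Gm L e e id a = idP (funbox L e) a"
      unfolding Gm_def idP_def by (simp add: map_prod.id)
  qed
  finally show ?thesis .
qed




theorem theorem4p13:
  shows
  \<comment> \<open>O is a well-defined functor MT_P \<rightarrow> Frm\<close>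
  "(\<forall>box :: 'm::{complete_lattice,boolean_algebra} \<Rightarrow> 'm.
       MT_algebra box \<longrightarrow> frame_on (opens box))
   \<and> (\<forall>(box1 :: 'm \<Rightarrow> 'm) (box2 :: 'n::{complete_lattice,boolean_algebra} \<Rightarrow> 'n) f.
       MT_algebra box1 \<and> MT_algebra box2 \<and> proximity box1 box2 f \<longrightarrow>
       frame_hom (opens box1) (opens box2) f)
   \<and> (\<forall>box :: 'm \<Rightarrow> 'm. MT_algebra box \<longrightarrow> (\<forall>a\<in>opens box. idP box a = a))
   \<and> (\<forall>(box1 :: 'm \<Rightarrow> 'm) (box2 :: 'n \<Rightarrow> 'n) (box3 :: 'k::{complete_lattice,boolean_algebra} \<Rightarrow> 'k) f g.
       MT_algebra box1 \<and> MT_algebra box2 \<and> MT_algebra box3 \<and>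
       proximity box1 box2 f \<and> proximity box2 box3 g \<longrightarrow>
       (\<forall>a\<in>opens box1. compP box1 g f a = g (f a)))
  \<comment> \<open>F is a well-defined functor Frm \<rightarrow> MT_P\<close>
   \<and> (\<forall>(L :: 'x::complete_lattice set) (e :: 'x \<Rightarrow> 'p::{complete_lattice,boolean_algebra}).
       frame_on L \<and> funayama_data L e \<longrightarrow>
       MT_algebra (funbox L e) \<and> opens (funbox L e) = e ` L)
   \<and> (\<forall>(L1 :: 'x set) (e1 :: 'x \<Rightarrow> 'p) (L2 :: 'y::complete_lattice set)
        (e2 :: 'y \<Rightarrow> 'q::{complete_lattice,boolean_algebra}) h.
       frame_on L1 \<and> funayama_data L1 e1 \<and> frame_on L2 \<and> funayama_data L2 e2 \<and>
       frame_hom L1 L2 h \<longrightarrow>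
       proximity (funbox L1 e1) (funbox L2 e2) (Fmor L1 e1 e2 h))
   \<and> (\<forall>(L :: 'x set) (e :: 'x \<Rightarrow> 'p).
       frame_on L \<and> funayama_data L e \<longrightarrow> Fmor L e e id = idP (funbox L e))
   \<and> (\<forall>(L1 :: 'x set) (e1 :: 'x \<Rightarrow> 'p) (L2 :: 'y set) (e2 :: 'y \<Rightarrow> 'q)
        (L3 :: 'z::complete_lattice set) (e3 :: 'z \<Rightarrow> 'r::{complete_lattice,boolean_algebra}) h k.
       frame_on L1 \<and> funayama_data L1 e1 \<and> frame_on L2 \<and> funayama_data L2 e2 \<and>
       frame_on L3 \<and> funayama_data L3 e3 \<and> frame_hom L1 L2 h \<and> frame_hom L2 L3 k \<longrightarrow>
       Fmor L1 e1 e3 (k \<circ> h) = compP (funbox L1 e1) (Fmor L2 e2 e3 k) (Fmor L1 e1 e2 h))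
  \<comment> \<open>natural isomorphism Id_Frm \<cong> O \<circ> F, with components e : L \<rightarrow> O(F L)\<close>
   \<and> (\<forall>(L :: 'x set) (e :: 'x \<Rightarrow> 'p).
       frame_on L \<and> funayama_data L e \<longrightarrow> frame_iso L (opens (funbox L e)) e)
   \<and> (\<forall>(L1 :: 'x set) (e1 :: 'x \<Rightarrow> 'p) (L2 :: 'y set) (e2 :: 'y \<Rightarrow> 'q) h.
       frame_on L1 \<and> funayama_data L1 e1 \<and> frame_on L2 \<and> funayama_data L2 e2 \<and>
       frame_hom L1 L2 h \<longrightarrow>
       (\<forall>x\<in>L1. Fmor L1 e1 e2 h (e1 x) = e2 (h x)))
  \<comment> \<open>natural isomorphism Id_MT_P \<cong> F \<circ> O: each M is isomorphic in MT_P to F(O M) via a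
      proximity isomorphism acting as e on open elements, and these components are natural\<close>
   \<and> (\<forall>(box :: 'm \<Rightarrow> 'm) (e :: 'm \<Rightarrow> 'p).
       MT_algebra box \<and> funayama_data (opens box) e \<longrightarrow>
       (\<exists>\<psi> \<phi>. proximity box (funbox (opens box) e) \<psi> \<and> (\<forall>a\<in>opens box. \<psi> a = e a) \<and>
              proximity (funbox (opens box) e) box \<phi> \<and>
              compP box \<phi> \<psi> = idP box \<and>
              compP (funbox (opens box) e) \<psi> \<phi> = idP (funbox (opens box) e)))
   \<and> (\<forall>(box1 :: 'm \<Rightarrow> 'm) (box2 :: 'n \<Rightarrow> 'n) (e1 :: 'm \<Rightarrow> 'p) (e2 :: 'n \<Rightarrow> 'q) f \<psi>1 \<psi>2.
       MT_algebra box1 \<and> MT_algebra box2 \<and>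
       funayama_data (opens box1) e1 \<and> funayama_data (opens box2) e2 \<and>
       proximity box1 box2 f \<and>
       proximity box1 (funbox (opens box1) e1) \<psi>1 \<and> (\<forall>a\<in>opens box1. \<psi>1 a = e1 a) \<and>
       proximity box2 (funbox (opens box2) e2) \<psi>2 \<and> (\<forall>a\<in>opens box2. \<psi>2 a = e2 a) \<longrightarrow>
       compP box1 \<psi>2 f = compP box1 (Fmor (opens box1) e1 e2 f) \<psi>1)"

proof (intro conjI)
  show "\<forall>box :: 'm::{complete_lattice,boolean_algebra} \<Rightarrow> 'm. MT_algebra box \<longrightarrow> frame_on (opens box)"
    using opens_frame by blast
  show "\<forall>(box1 :: 'm \<Rightarrow> 'm) (box2 :: 'n::{complete_lattice,boolean_algebra} \<Rightarrow> 'n) f.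
       MT_algebra box1 \<and> MT_algebra box2 \<and> proximity box1 box2 f \<longrightarrow>
       frame_hom (opens box1) (opens box2) f" using proxD(1) by blast
  show "\<forall>box :: 'm \<Rightarrow> 'm. MT_algebra box \<longrightarrow> (\<forall>a\<in>opens box. idP box a = a)"
    using idP_open by blast
  show "\<forall>(box1 :: 'm \<Rightarrow> 'm) (box2 :: 'n \<Rightarrow> 'n) (box3 :: 'k::{complete_lattice,boolean_algebra} \<Rightarrow> 'k) f g.
       MT_algebra box1 \<and> MT_algebra box2 \<and> MT_algebra box3 \<and>
       proximity box1 box2 f \<and> proximity box2 box3 g \<longrightarrow>
       (\<forall>a\<in>opens box1. compP box1 g f a = g (f a))"
    using compP_open by blast
  show "\<forall>(L :: 'x::complete_lattice set) (e :: 'x \<Rightarrow> 'p::{complete_lattice,boolean_algebra}).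
       frame_on L \<and> funayama_data L e \<longrightarrow>
       MT_algebra (funbox L e) \<and> opens (funbox L e) = e ` L"
    using funbox_MT funbox_opens by blast
  show "\<forall>(L1 :: 'x set) (e1 :: 'x \<Rightarrow> 'p) (L2 :: 'y::complete_lattice set)
        (e2 :: 'y \<Rightarrow> 'q::{complete_lattice,boolean_algebra}) h.
       frame_on L1 \<and> funayama_data L1 e1 \<and> frame_on L2 \<and> funayama_data L2 e2 \<and>
       frame_hom L1 L2 h \<longrightarrow>
       proximity (funbox L1 e1) (funbox L2 e2) (Fmor L1 e1 e2 h)"
  proof (intro allI impI)
    fix L1 :: "'x set" and e1 :: "'x \<Rightarrow> 'p" and L2 :: "'y set" and e2 :: "'y \<Rightarrow> 'q" and h
    assume A: "frame_on L1 \<and> funayama_data L1 e1 \<and> frame_on L2 \<and> funayama_data L2 e2 \<and> frame_hom L1 L2 h"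
    hence A': "frame_on L1" "funayama_data L1 e1" "frame_on L2" "funayama_data L2 e2" "frame_hom L1 L2 h" by auto
    show "proximity (funbox L1 e1) (funbox L2 e2) (Fmor L1 e1 e2 h)"
      unfolding Fmor_Gm[OF A'] by (rule G_prox[OF funbox_emb[OF A'(1,2)] funbox_emb[OF A'(3,4)] A'(5)])
  qed
  show "\<forall>(L :: 'x set) (e :: 'x \<Rightarrow> 'p).
       frame_on L \<and> funayama_data L e \<longrightarrow> Fmor L e e id = idP (funbox L e)"
    using Gm_id_Fmor by blast
  show "\<forall>(L1 :: 'x set) (e1 :: 'x \<Rightarrow> 'p) (L2 :: 'y set) (e2 :: 'y \<Rightarrow> 'q)
        (L3 :: 'z::complete_lattice set) (e3 :: 'z \<Rightarrow> 'r::{complete_lattice,boolean_algebra}) h k.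
       frame_on L1 \<and> funayama_data L1 e1 \<and> frame_on L2 \<and> funayama_data L2 e2 \<and>
       frame_on L3 \<and> funayama_data L3 e3 \<and> frame_hom L1 L2 h \<and> frame_hom L2 L3 k \<longrightarrow>
       Fmor L1 e1 e3 (k \<circ> h) = compP (funbox L1 e1) (Fmor L2 e2 e3 k) (Fmor L1 e1 e2 h)"
  proof (intro allI impI)
    fix L1 :: "'x set" and e1 :: "'x \<Rightarrow> 'p" and L2 :: "'y set" and e2 :: "'y \<Rightarrow> 'q"
      and L3 :: "'z set" and e3 :: "'z \<Rightarrow> 'r" and h k
    assume "frame_on L1 \<and> funayama_data L1 e1 \<and> frame_on L2 \<and> funayama_data L2 e2 \<and>
       frame_on L3 \<and> funayama_data L3 e3 \<and> frame_hom L1 L2 h \<and> frame_hom L2 L3 k"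
    hence A: "frame_on L1" "funayama_data L1 e1" "frame_on L2" "funayama_data L2 e2"
       "frame_on L3" "funayama_data L3 e3" "frame_hom L1 L2 h" "frame_hom L2 L3 k" by auto
    have kh: "frame_hom L1 L3 (k \<circ> h)" by (rule frame_hom_comp[OF A(7,8)])
    note E1 = funbox_emb[OF A(1,2)] and E2 = funbox_emb[OF A(3,4)] and E3 = funbox_emb[OF A(5,6)]
    show "Fmor L1 e1 e3 (k \<circ> h) = compP (funbox L1 e1) (Fmor L2 e2 e3 k) (Fmor L1 e1 e2 h)"
      unfolding Fmor_Gm[OF A(1,2,5,6) kh] Fmor_Gm[OF A(3,4,5,6,8)] Fmor_Gm[OF A(1,2,3,4,7)]
    proof
      fix a
      have "{Gm L2 e2 e3 k (Gm L1 e1 e2 h x) |x. x \<in> LC (funbox L1 e1) \<and> x \<le> a}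
          = (\<lambda>p. Gm L2 e2 e3 k (Gm L1 e1 e2 h (pc e1 p))) ` {p \<in> L1 \<times> L1. pc e1 p \<le> a}"
        unfolding emb_frameD(8)[OF E1] by auto
      also have "\<dots> = (\<lambda>p. pc e3 (map_prod (k \<circ> h) (k \<circ> h) p)) ` {p \<in> L1 \<times> L1. pc e1 p \<le> a}"
      proof (rule image_cong)
        fix p assume p: "p \<in> {p \<in> L1 \<times> L1. pc e1 p \<le> a}"
        have hp: "map_prod h h p \<in> L2 \<times> L2" using p hprops(2)[OF E1 E2 A(7)] by (auto simp: mem_Times_iff)
        show "Gm L2 e2 e3 k (Gm L1 e1 e2 h (pc e1 p)) = pc e3 (map_prod (k \<circ> h) (k \<circ> h) p)"
          using G_piece[OF E1 E2 A(7)] G_piece[OF E2 E3 A(8) hp] p by (cases p) simp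
      qed simp
      finally show "Gm L1 e1 e3 (k \<circ> h) a = compP (funbox L1 e1) (Gm L2 e2 e3 k) (Gm L1 e1 e2 h) a"
        unfolding compP_def Gm_def by simp
    qed
  qed
  show "\<forall>(L :: 'x set) (e :: 'x \<Rightarrow> 'p).
       frame_on L \<and> funayama_data L e \<longrightarrow> frame_iso L (opens (funbox L e)) e"
  proof (intro allI impI)
    fix L :: "'x set" and e :: "'x \<Rightarrow> 'p"
    assume "frame_on L \<and> funayama_data L e"
    hence A: "frame_on L" "funayama_data L e" by auto
    note D = emb_frameD[OF funbox_emb[OF A]]
    have "frame_hom L (e ` L) e" unfolding frame_hom_def
      using D(3,6) LC_L[OF A] by (auto simp: lhom_on_def lclosed_def)
    moreover have "bij_betw e L (e ` L)" using A(2) by (simp add: funayama_data_def bij_betw_def)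
    ultimately show "frame_iso L (opens (funbox L e)) e" unfolding frame_iso_def D(7) by simp
  qed
  show "\<forall>(L1 :: 'x set) (e1 :: 'x \<Rightarrow> 'p) (L2 :: 'y set) (e2 :: 'y \<Rightarrow> 'q) h.
       frame_on L1 \<and> funayama_data L1 e1 \<and> frame_on L2 \<and> funayama_data L2 e2 \<and>
       frame_hom L1 L2 h \<longrightarrow>
       (\<forall>x\<in>L1. Fmor L1 e1 e2 h (e1 x) = e2 (h x))"
  proof (intro allI impI ballI)
    fix L1 :: "'x set" and e1 :: "'x \<Rightarrow> 'p" and L2 :: "'y set" and e2 :: "'y \<Rightarrow> 'q" and h x
    assume A: "frame_on L1 \<and> funayama_data L1 e1 \<and> frame_on L2 \<and> funayama_data L2 e2 \<and> frame_hom L1 L2 h"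
      and x: "x \<in> L1"
    hence A': "frame_on L1" "funayama_data L1 e1" "frame_on L2" "funayama_data L2 e2" "frame_hom L1 L2 h" by auto
    show "Fmor L1 e1 e2 h (e1 x) = e2 (h x)"
      unfolding Fmor_Gm[OF A'] by (rule G_open[OF funbox_emb[OF A'(1,2)] funbox_emb[OF A'(3,4)] A'(5) x])
  qed
  show "\<forall>(box :: 'm \<Rightarrow> 'm) (e :: 'm \<Rightarrow> 'p).
       MT_algebra box \<and> funayama_data (opens box) e \<longrightarrow>
       (\<exists>\<psi> \<phi>. proximity box (funbox (opens box) e) \<psi> \<and> (\<forall>a\<in>opens box. \<psi> a = e a) \<and>
              proximity (funbox (opens box) e) box \<phi> \<and>
              compP box \<phi> \<psi> = idP box \<and>
              compP (funbox (opens box) e) \<psi> \<phi> = idP (funbox (opens box) e))"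
  proof (intro allI impI)
    fix box :: "'m \<Rightarrow> 'm" and e :: "'m \<Rightarrow> 'p"
    assume "MT_algebra box \<and> funayama_data (opens box) e"
    hence M: "MT_algebra box" and FD: "funayama_data (opens box) e" by auto
    have FL: "frame_on (opens box)" by (rule opens_frame[OF M])
    note Ei = emb_id[OF M] and Ef = funbox_emb[OF FL FD]
    let ?psi = "Gm (opens box) id e id" and ?phi = "Gm (opens box) e id id"
    have p1: "proximity box (funbox (opens box) e) ?psi" by (rule G_prox[OF Ei Ef frame_hom_id])
    have p2: "\<forall>a\<in>opens box. ?psi a = e a" using G_open[OF Ei Ef frame_hom_id] by simp
    have p3: "proximity (funbox (opens box) e) box ?phi" by (rule G_prox[OF Ef Ei frame_hom_id])
    have p4: "compP box ?phi ?psi = idP box"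
    proof (rule compP_inv)
      fix x assume "x \<in> LC box"
      then obtain p where p: "p \<in> opens box \<times> opens box" "x = pc id p" using emb_frameD(8)[OF Ei] by auto
      show "?phi (?psi x) = x" using p G_piece[OF Ei Ef frame_hom_id] G_piece[OF Ef Ei frame_hom_id]
        by (simp add: map_prod.id)
    qed
    have p5: "compP (funbox (opens box) e) ?psi ?phi = idP (funbox (opens box) e)"
    proof (rule compP_inv)
      fix x assume "x \<in> LC (funbox (opens box) e)"
      then obtain p where p: "p \<in> opens box \<times> opens box" "x = pc e p" using emb_frameD(8)[OF Ef] by auto
      show "?psi (?phi x) = x" using p G_piece[OF Ei Ef frame_hom_id] G_piece[OF Ef Ei frame_hom_id]
        by (simp add: map_prod.id)
    qed
    show "\<exists>\<psi> \<phi>. proximity box (funbox (opens box) e) \<psi> \<and> (\<forall>a\<in>opens box. \<psi> a = e a) \<and>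
              proximity (funbox (opens box) e) box \<phi> \<and>
              compP box \<phi> \<psi> = idP box \<and>
              compP (funbox (opens box) e) \<psi> \<phi> = idP (funbox (opens box) e)"
      using p1 p2 p3 p4 p5 by blast
  qed
  show "\<forall>(box1 :: 'm \<Rightarrow> 'm) (box2 :: 'n \<Rightarrow> 'n) (e1 :: 'm \<Rightarrow> 'p) (e2 :: 'n \<Rightarrow> 'q) f \<psi>1 \<psi>2.
       MT_algebra box1 \<and> MT_algebra box2 \<and>
       funayama_data (opens box1) e1 \<and> funayama_data (opens box2) e2 \<and>
       proximity box1 box2 f \<and>
       proximity box1 (funbox (opens box1) e1) \<psi>1 \<and> (\<forall>a\<in>opens box1. \<psi>1 a = e1 a) \<and>
       proximity box2 (funbox (opens box2) e2) \<psi>2 \<and> (\<forall>a\<in>opens box2. \<psi>2 a = e2 a) \<longrightarrow>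
       compP box1 \<psi>2 f = compP box1 (Fmor (opens box1) e1 e2 f) \<psi>1"
  proof (intro allI impI)
    fix box1 :: "'m \<Rightarrow> 'm" and box2 :: "'n \<Rightarrow> 'n" and e1 :: "'m \<Rightarrow> 'p" and e2 :: "'n \<Rightarrow> 'q"
      and f \<psi>1 \<psi>2
    assume "MT_algebra box1 \<and> MT_algebra box2 \<and>
       funayama_data (opens box1) e1 \<and> funayama_data (opens box2) e2 \<and>
       proximity box1 box2 f \<and>
       proximity box1 (funbox (opens box1) e1) \<psi>1 \<and> (\<forall>a\<in>opens box1. \<psi>1 a = e1 a) \<and>
       proximity box2 (funbox (opens box2) e2) \<psi>2 \<and> (\<forall>a\<in>opens box2. \<psi>2 a = e2 a)"
    hence M1: "MT_algebra box1" and M2: "MT_algebra box2" and FD1: "funayama_data (opens box1) e1"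
      and FD2: "funayama_data (opens box2) e2" and pf: "proximity box1 box2 f"
      and p1: "proximity box1 (funbox (opens box1) e1) \<psi>1" and o1: "\<forall>a\<in>opens box1. \<psi>1 a = e1 a"
      and p2: "proximity box2 (funbox (opens box2) e2) \<psi>2" and o2: "\<forall>a\<in>opens box2. \<psi>2 a = e2 a"
      by auto
    have FL1: "frame_on (opens box1)" by (rule opens_frame[OF M1])
    have FL2: "frame_on (opens box2)" by (rule opens_frame[OF M2])
    have FH: "frame_hom (opens box1) (opens box2) f" by (rule proxD(1)[OF pf])
    note E1 = funbox_emb[OF FL1 FD1] and E2 = funbox_emb[OF FL2 FD2]
    show "compP box1 \<psi>2 f = compP box1 (Fmor (opens box1) e1 e2 f) \<psi>1"
    proof (rule compP_cong)
      fix x assume "x \<in> LC box1"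
      then obtain u v where uv: "u \<in> opens box1" "v \<in> opens box1" "x = inf u (- v)"
        unfolding LC_box[OF M1] by blast
      have fo: "f u \<in> opens box2" "f v \<in> opens box2" using FH uv by (auto simp: frame_hom_def)
      have "f x = inf (f u) (- f v)" using uv proxD(2)[OF pf] prox_facts(4)[OF M1 pf] by simp
      hence "\<psi>2 (f x) = inf (e2 (f u)) (- e2 (f v))"
        using proxD(2)[OF p2] prox_facts(4)[OF M2 p2] fo o2 by simp
      moreover have "\<psi>1 x = pc e1 (u,v)"
        using uv proxD(2)[OF p1] prox_facts(4)[OF M1 p1] o1 by (simp add: pc_def)
      moreover have "Fmor (opens box1) e1 e2 f (pc e1 (u,v)) = pc e2 (f u, f v)"
        unfolding Fmor_Gm[OF FL1 FD1 FL2 FD2 FH] using G_piece[OF E1 E2 FH, of "(u,v)"] uv by simp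
      ultimately show "\<psi>2 (f x) = Fmor (opens box1) e1 e2 f (\<psi>1 x)" by (simp add: pc_def)
    qed
  qed
qed


end
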